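(* Let $A$ be a locally-complex Cayley--Dickson algebra, let $I\in A$ with $\mathrm{tr}(I)=0$ and $\mathrm{n}(I)=1$, and let $f(x)\in A[x]$. Then for every $\lambda\in\mathbb{C}_I$ we have $f_I(\lambda)\in\mathbb{C}_I$ and $f_I^{\perp}(\lambda)\in\mathbb{C}_I^{\perp}$. Consequently, for $\lambda\in\mathbb{C}_I$, $f(\lambda)=0$ if and only if $f_I(\lambda)=f_I^{\perp}(\lambda)=0$.
   Context: Real Cayley--Dickson algebras: $A_0=\mathbb{R}$ with identity involution, $A_{k+1}=A_k\{\gamma_k\}=A_k\times A_k$ with product $(a,b)(c,d)=(ac+\gamma_k\bar d b,\ da+b\bar c)$ and involution $\overline{(a,b)}=(\bar a,-b)$. A real unital algebra is locally-complex if every non-real element generates a subalgebra isomorphic to $\mathbb{C}$ (for Cayley--Dickson algebras: all $\gamma_k=-1$ up to isomorphism). Trace $\mathrm{tr}(\lambda)=\lambda+\bar\lambda\in\mathbb{R}$, norm $\mathrm{n}(\lambda)=\bar\lambda\lambda\in\mathbb{R}$; $\langle\cdot,\cdot\rangle$ is the symmetric bilinear form with $\langle a,a\rangle=\mathrm{n}(a)$ (the Euclidean inner product). For $I$ with trace $0$ and norm $1$, $\mathbb{C}_I=\mathbb{R}+\mathbb{R}I\cong\mathbb{C}$, $\mathbb{C}_I^\perp=\{a\in A:\langle a,b\rangle=0\ \forall b\in\mathbb{C}_I\}$, and $\pi_I:A\to\mathbb{C}_I$ is the orthogonal projection. $A[x]=A\otimes_{\mathbb{R}}\mathbb{R}[x]$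 with central $x$; for $f(x)=\sum_k a_kx^k$ put $f_I(x)=\sum_k\pi_I(a_k)x^k$ and $f_I^\perp(x)=\sum_k(a_k-\pi_I(a_k))x^k$, so $f=f_I+f_I^\perp$; substitution $f(r)=\sum_k a_k(r^k)$. *)

theory Defs
  imports Main Complex_Main
begin

text \<open>Real Cayley--Dickson algebras A_n with all gamma_k = -1 (the locally-complex ones).
  An element of A_n is a binary tree of depth n with real leaves:
  A_0 = R (leaf CR r), A_(k+1) = A_k x A_k (node CP a b).\<close>

datatype cd = CR real | CP cd cd

fun cd_wf :: "nat \<Rightarrow> cd \<Rightarrow> bool" where
  "cd_wf 0 x = (case x of CR _ \<Rightarrow> True | CP _ _ \<Rightarrow> False)"
| "cd_wf (Suc n) x = (case x of CR _ \<Rightarrow> False | CP a b \<Rightarrow> cd_wf n a \<and> cd_wf n b)"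

definition CD :: "nat \<Rightarrow> cd set" where
  "CD n = {x. cd_wf n x}"

fun cd_of_real :: "nat \<Rightarrow> real \<Rightarrow> cd" where
  "cd_of_real 0 r = CR r"
| "cd_of_real (Suc n) r = CP (cd_of_real n r) (cd_of_real n 0)"

abbreviation cd_zero :: "nat \<Rightarrow> cd" where "cd_zero n \<equiv> cd_of_real n 0"
abbreviation cd_one :: "nat \<Rightarrow> cd" where "cd_one n \<equiv> cd_of_real n 1"

fun cd_add :: "cd \<Rightarrow> cd \<Rightarrow> cd" where
  "cd_add (CR a) (CR b) = CR (a + b)"
| "cd_add (CP a b) (CP c d) = CP (cd_add a c) (cd_add b d)"
| "cd_add _ _ = CR 0"

fun cd_scale :: "real \<Rightarrow> cd \<Rightarrow> cd" where
  "cd_scale s (CR a) = CR (s * a)"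
| "cd_scale s (CP a b) = CP (cd_scale s a) (cd_scale s b)"

definition cd_neg :: "cd \<Rightarrow> cd" where "cd_neg x = cd_scale (-1) x"

definition cd_diff :: "cd \<Rightarrow> cd \<Rightarrow> cd" where "cd_diff x y = cd_add x (cd_neg y)"

fun cd_conj :: "cd \<Rightarrow> cd" where
  "cd_conj (CR a) = CR a"
| "cd_conj (CP a b) = CP (cd_conj a) (cd_neg b)"

lemma size_cd_scale [simp]: "size (cd_scale s x) = size x"
  by (induction x) auto

lemma size_cd_conj [simp]: "size (cd_conj x) = size x"
  by (induction x) (auto simp: cd_neg_def)

function (sequential) cd_mult :: "cd \<Rightarrow> cd \<Rightarrow> cd" where
  "cd_mult (CR a) (CR c) = CR (a * c)"
| "cd_mult (CP a b) (CP c d) =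
     CP (cd_add (cd_mult a c) (cd_neg (cd_mult (cd_conj d) b)))
        (cd_add (cd_mult d a) (cd_mult b (cd_conj c)))"
| "cd_mult _ _ = CR 0"
  by pat_completeness auto
termination by (relation "measure (\<lambda>(x, y). size x + size y)") auto

text \<open>Real part (coefficient of 1) of an element; used to read off real-valued
  quantities such as trace and norm which lie in R = R*1.\<close>
fun cd_re :: "cd \<Rightarrow> real" where
  "cd_re (CR a) = a"
| "cd_re (CP a b) = cd_re a"

definition cd_tr :: "cd \<Rightarrow> real" where
  "cd_tr x = cd_re (cd_add x (cd_conj x))"

definition cd_norm :: "cd \<Rightarrow> real" where
  "cd_norm x = cd_re (cd_mult (cd_conj x) x)"

definition cd_inner :: "cd \<Rightarrow> cd \<Rightarrow> real" where
  "cd_inner x y = (cd_norm (cd_add x y) - cd_norm x - cd_norm y) / 2"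

definition CI :: "nat \<Rightarrow> cd \<Rightarrow> cd set" where
  "CI n I = {cd_add (cd_of_real n r) (cd_scale s I) | r s. True}"

definition CI_perp :: "nat \<Rightarrow> cd \<Rightarrow> cd set" where
  "CI_perp n I = {a \<in> CD n. \<forall>b \<in> CI n I. cd_inner a b = 0}"

definition proj_I :: "nat \<Rightarrow> cd \<Rightarrow> cd \<Rightarrow> cd" where
  "proj_I n I a = (THE p. p \<in> CI n I \<and> cd_diff a p \<in> CI_perp n I)"

text \<open>Polynomials in A_n[x] as coefficient lists [a_0, a_1, ...]; powers r^k
  defined by r^0 = 1, r^(k+1) = r r^k (A_n is power-associative).\<close>
fun cd_pow :: "nat \<Rightarrow> cd \<Rightarrow> nat \<Rightarrow> cd" where
  "cd_pow n r 0 = cd_one n"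
| "cd_pow n r (Suc k) = cd_mult r (cd_pow n r k)"

fun cd_sum :: "nat \<Rightarrow> cd list \<Rightarrow> cd" where
  "cd_sum n [] = cd_zero n"
| "cd_sum n (x # xs) = cd_add x (cd_sum n xs)"

definition poly_eval :: "nat \<Rightarrow> cd list \<Rightarrow> cd \<Rightarrow> cd" where
  "poly_eval n f r = cd_sum n [cd_mult (f ! k) (cd_pow n r k). k \<leftarrow> [0..<length f]]"

definition poly_I :: "nat \<Rightarrow> cd \<Rightarrow> cd list \<Rightarrow> cd list" where
  "poly_I n I f = map (proj_I n I) f"

definition poly_I_perp :: "nat \<Rightarrow> cd \<Rightarrow> cd list \<Rightarrow> cd list" where
  "poly_I_perp n I f = map (\<lambda>a. cd_diff a (proj_I n I a)) f"

end

theory Submission imports Defs begin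

fun dot :: "cd \<Rightarrow> cd \<Rightarrow> real" where
  "dot (CR a) (CR b) = a * b"
| "dot (CP a b) (CP c d) = dot a c + dot b d"
| "dot _ _ = 0"

lemma wf_add: "cd_wf n x \<Longrightarrow> cd_wf n y \<Longrightarrow> cd_wf n (cd_add x y)"
  by (induction n arbitrary: x y) (auto split: cd.splits)
lemma wf_scale: "cd_wf n x \<Longrightarrow> cd_wf n (cd_scale s x)"
  by (induction n arbitrary: x) (auto split: cd.splits)
lemma wf_neg: "cd_wf n x \<Longrightarrow> cd_wf n (cd_neg x)"
  by (simp add: cd_neg_def wf_scale)
lemma wf_diff: "cd_wf n x \<Longrightarrow> cd_wf n y \<Longrightarrow> cd_wf n (cd_diff x y)"
  by (simp add: cd_diff_def wf_neg wf_add)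
lemma wf_conj: "cd_wf n x \<Longrightarrow> cd_wf n (cd_conj x)"
  by (induction n arbitrary: x) (auto split: cd.splits simp: wf_neg)
lemma wf_mult: "cd_wf n x \<Longrightarrow> cd_wf n y \<Longrightarrow> cd_wf n (cd_mult x y)"
  by (induction n arbitrary: x y) (auto split: cd.splits simp: wf_neg wf_add wf_conj)
lemma wf_of_real: "cd_wf n (cd_of_real n r)"
  by (induction n arbitrary: r) auto

lemmas wfs = wf_add wf_scale wf_neg wf_diff wf_conj wf_mult wf_of_real

lemma add_comm: "cd_wf n x \<Longrightarrow> cd_wf n y \<Longrightarrow> cd_add x y = cd_add y x"
  by (induction n arbitrary: x y) (auto split: cd.splits)
lemma add_assoc: "cd_wf n x \<Longrightarrow> cd_wf n y \<Longrightarrow> cd_wf n z \<Longrightarrow>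
   cd_add (cd_add x y) z = cd_add x (cd_add y z)"
  by (induction n arbitrary: x y z) (auto split: cd.splits)
lemma add_zero: "cd_wf n x \<Longrightarrow> cd_add x (cd_zero n) = x"
  by (induction n arbitrary: x) (auto split: cd.splits)
lemma zero_add: "cd_wf n x \<Longrightarrow> cd_add (cd_zero n) x = x"
  by (induction n arbitrary: x) (auto split: cd.splits)
lemma add_neg: "cd_wf n x \<Longrightarrow> cd_add x (cd_neg x) = cd_zero n"
  by (induction n arbitrary: x) (auto split: cd.splits simp: cd_neg_def)
lemma scale_scale: "cd_scale s (cd_scale t x) = cd_scale (s*t) x"
  by (induction x) auto
lemma scale_one: "cd_scale 1 x = x"
  by (induction x) auto
lemma scale_add: "cd_scale s (cd_add x y) = cd_add (cd_scale s x) (cd_scale s y)"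
  by (induction x y rule: cd_add.induct) (auto simp: algebra_simps)
lemma add_scale: "cd_wf n x \<Longrightarrow> cd_add (cd_scale s x) (cd_scale t x) = cd_scale (s+t) x"
  by (induction n arbitrary: x) (auto split: cd.splits simp: algebra_simps)
lemma scale_zero: "cd_wf n x \<Longrightarrow> cd_scale 0 x = cd_zero n"
  by (induction n arbitrary: x) (auto split: cd.splits)
lemma scale_of_real: "cd_scale s (cd_of_real n r) = cd_of_real n (s*r)"
  by (induction n arbitrary: r) auto
lemma add_of_real: "cd_add (cd_of_real n r) (cd_of_real n t) = cd_of_real n (r+t)"
  by (induction n arbitrary: r t) auto
lemma conj_add: "cd_wf n x \<Longrightarrow> cd_wf n y \<Longrightarrow> cd_conj (cd_add x y) = cd_add (cd_conj x) (cd_conj y)"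
  by (induction n arbitrary: x y) (auto split: cd.splits simp: cd_neg_def scale_add)
lemma conj_scale: "cd_conj (cd_scale s x) = cd_scale s (cd_conj x)"
  by (induction x) (auto simp: cd_neg_def scale_scale mult.commute)
lemma conj_conj: "cd_conj (cd_conj x) = x"
  by (induction x) (auto simp: cd_neg_def scale_scale scale_one)
lemma conj_of_real: "cd_conj (cd_of_real n r) = cd_of_real n r"
  by (induction n arbitrary: r) (auto simp: cd_neg_def scale_of_real)
lemma mult_scale_both: "cd_mult (cd_scale s x) y = cd_scale s (cd_mult x y) \<and> cd_mult x (cd_scale s y) = cd_scale s (cd_mult x y)"
  by (induction x y rule: cd_mult.induct)
     (auto simp: cd_neg_def conj_scale scale_scale mult.commute scale_add)
lemma mult_scale_left: "cd_mult (cd_scale s x) y = cd_scale s (cd_mult x y)"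
  using mult_scale_both by blast
lemma mult_scale_right: "cd_mult x (cd_scale s y) = cd_scale s (cd_mult x y)"
  using mult_scale_both by blast

lemma swap4: "cd_wf n a \<Longrightarrow> cd_wf n b \<Longrightarrow> cd_wf n c \<Longrightarrow> cd_wf n d \<Longrightarrow>
  cd_add (cd_add a b) (cd_add c d) = cd_add (cd_add a c) (cd_add b d)"
  by (induction n arbitrary: a b c d) (auto split: cd.splits)

lemma neg_add: "cd_neg (cd_add x y) = cd_add (cd_neg x) (cd_neg y)"
  by (simp add: cd_neg_def scale_add)

lemma mult_distrib: "cd_wf n x \<Longrightarrow> cd_wf n y \<Longrightarrow> cd_wf n z \<Longrightarrow>
  cd_mult (cd_add x y) z = cd_add (cd_mult x z) (cd_mult y z) \<and>
  cd_mult z (cd_add x y) = cd_add (cd_mult z x) (cd_mult z y)"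
proof (induction n arbitrary: x y z)
  case 0 then show ?case by (auto split: cd.splits simp: algebra_simps)
next
  case (Suc n)
  then obtain a b c d e f where xyz: "x = CP a b" "y = CP c d" "z = CP e f"
    and w: "cd_wf n a" "cd_wf n b" "cd_wf n c" "cd_wf n d" "cd_wf n e" "cd_wf n f"
    by (auto split: cd.splits)
  have c1: "cd_conj (cd_add a c) = cd_add (cd_conj a) (cd_conj c)"
     "cd_conj (cd_add b d) = cd_add (cd_conj b) (cd_conj d)"
    using w by (auto simp: conj_add)
  show ?case using w Suc.IH[of a c e] Suc.IH[of b d "cd_conj f"] Suc.IH[of a c f]
     Suc.IH[of b d "cd_conj e"] Suc.IH[of "cd_conj a" "cd_conj c" f] Suc.IH[of "cd_conj b" "cd_conj d" f]
     Suc.IH[of "cd_conj b" "cd_conj d" e] Suc.IH[of a c "cd_conj f"] Suc.IH[of b d e]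
    apply (simp add: xyz c1 wfs neg_add)
    apply (simp add: swap4[of n] wfs)
    done
qed

lemma mult_add_left: "cd_wf n x \<Longrightarrow> cd_wf n y \<Longrightarrow> cd_wf n z \<Longrightarrow>
  cd_mult (cd_add x y) z = cd_add (cd_mult x z) (cd_mult y z)"
  using mult_distrib by blast
lemma mult_add_right: "cd_wf n x \<Longrightarrow> cd_wf n y \<Longrightarrow> cd_wf n z \<Longrightarrow>
  cd_mult z (cd_add x y) = cd_add (cd_mult z x) (cd_mult z y)"
  using mult_distrib by blast

lemma mult_of_real: "cd_wf n x \<Longrightarrow>
   cd_mult (cd_of_real n r) x = cd_scale r x \<and> cd_mult x (cd_of_real n r) = cd_scale r x"
proof (induction n arbitrary: x r)
  case 0 then show ?case by (auto split: cd.splits simp: algebra_simps)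
next
  case (Suc n)
  then obtain a b where x: "x = CP a b" and w: "cd_wf n a" "cd_wf n b"
    by (auto split: cd.splits)
  show ?case using w Suc.IH[of a r] Suc.IH[of b r] Suc.IH[of "cd_conj b" 0] Suc.IH[of "cd_conj a" 0]
    Suc.IH[of a 0] Suc.IH[of b 0]
    by (simp add: x wfs conj_of_real scale_zero[of n] cd_neg_def scale_of_real add_zero zero_add)
qed

lemma mult_of_real_left: "cd_wf n x \<Longrightarrow> cd_mult (cd_of_real n r) x = cd_scale r x"
  using mult_of_real by blast
lemma mult_of_real_right: "cd_wf n x \<Longrightarrow> cd_mult x (cd_of_real n r) = cd_scale r x"
  using mult_of_real by blast

lemma conj_mult: "cd_wf n x \<Longrightarrow> cd_wf n y \<Longrightarrow> cd_conj (cd_mult x y) = cd_mult (cd_conj y) (cd_conj x)"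
proof (induction n arbitrary: x y)
  case 0 then show ?case by (auto split: cd.splits)
next
  case (Suc n)
  then obtain a b c d where xy: "x = CP a b" "y = CP c d"
    and w: "cd_wf n a" "cd_wf n b" "cd_wf n c" "cd_wf n d"
    by (auto split: cd.splits)
  show ?case using w Suc.IH[of a c] Suc.IH[of "cd_conj d" b]
    by (simp add: xy wfs conj_add[of n] cd_neg_def conj_scale mult_scale_left mult_scale_right
       scale_scale conj_conj scale_add add_comm[of n "cd_scale (-1) (cd_mult d a)"])
qed

lemma conj_mult_self: "cd_wf n x \<Longrightarrow> cd_mult (cd_conj x) x = cd_of_real n (dot x x)"
proof (induction n arbitrary: x)
  case 0 then show ?case by (auto split: cd.splits)
next
  case (Suc n)
  then obtain a b where x: "x = CP a b" and w: "cd_wf n a" "cd_wf n b"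
    by (auto split: cd.splits)
  have "cd_add (cd_mult b (cd_conj a)) (cd_scale (-1) (cd_mult b (cd_conj a))) = cd_zero n"
    using add_neg[of n "cd_mult b (cd_conj a)"] w by (simp add: cd_neg_def wfs)
  then show ?case using w Suc.IH
    by (simp add: x cd_neg_def mult_scale_left mult_scale_right scale_scale scale_one add_of_real)
qed

lemma re_of_real: "cd_re (cd_of_real n r) = r"
  by (induction n) auto

lemma norm_dot: "cd_wf n x \<Longrightarrow> cd_norm x = dot x x"
  by (simp add: cd_norm_def conj_mult_self re_of_real)

lemma dot_comm: "dot x y = dot y x"
  by (induction x y rule: dot.induct) auto
lemma dot_add_left: "cd_wf n x \<Longrightarrow> cd_wf n y \<Longrightarrow> cd_wf n z \<Longrightarrow> dot (cd_add x y) z = dot x z + dot y z"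
  by (induction n arbitrary: x y z) (auto split: cd.splits simp: algebra_simps)
lemma dot_add_right: "cd_wf n x \<Longrightarrow> cd_wf n y \<Longrightarrow> cd_wf n z \<Longrightarrow> dot z (cd_add x y) = dot z x + dot z y"
  using dot_add_left dot_comm by metis
lemma dot_scale_left: "dot (cd_scale s x) y = s * dot x y"
  by (induction x y rule: dot.induct) (auto simp: algebra_simps)
lemma dot_scale_right: "dot x (cd_scale s y) = s * dot x y"
  using dot_scale_left dot_comm by metis
lemma dot_conj: "dot (cd_conj x) (cd_conj y) = dot x y"
  by (induction x y rule: dot.induct) (auto simp: cd_neg_def dot_scale_left dot_scale_right)
lemma dot_conj2: "dot (cd_conj x) y = dot x (cd_conj y)"
  using dot_conj[of x "cd_conj y"] by (simp add: conj_conj)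
lemma dot_of_real: "cd_wf n x \<Longrightarrow> dot (cd_of_real n r) x = r * cd_re x"
proof (induction n arbitrary: x r)
  case 0 then show ?case by (auto split: cd.splits)
next
  case (Suc n)
  then show ?case by (auto split: cd.splits)
qed
lemma add_conj_self: "cd_wf n x \<Longrightarrow> cd_add x (cd_conj x) = cd_of_real n (2 * cd_re x)"
proof (induction n arbitrary: x)
  case 0 then show ?case by (auto split: cd.splits)
next
  case (Suc n)
  then show ?case by (auto split: cd.splits simp: add_neg)
qed
lemma dot_self_nonneg: "dot x x \<ge> 0"
  by (induction x) auto
lemma dot_self_zero: "cd_wf n x \<Longrightarrow> dot x x = 0 \<Longrightarrow> x = cd_zero n"
proof (induction n arbitrary: x)
  case 0 then show ?case by (auto split: cd.splits)
next
  case (Suc n)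
  then show ?case using dot_self_nonneg
    by (auto split: cd.splits simp: add_nonneg_eq_0_iff)
qed

lemma adjoint: "cd_wf n x \<Longrightarrow> cd_wf n y \<Longrightarrow> cd_wf n z \<Longrightarrow>
  dot (cd_mult x y) z = dot y (cd_mult (cd_conj x) z) \<and>
  dot (cd_mult x y) z = dot x (cd_mult z (cd_conj y))"
proof (induction n arbitrary: x y z)
  case 0 then show ?case by (auto split: cd.splits)
next
  case (Suc n)
  then obtain a b c d e f where xyz: "x = CP a b" "y = CP c d" "z = CP e f"
    and w: "cd_wf n a" "cd_wf n b" "cd_wf n c" "cd_wf n d" "cd_wf n e" "cd_wf n f"
    by (auto split: cd.splits)
  note IH = Suc.IH
  have h1: "dot (cd_mult a c) e = dot c (cd_mult (cd_conj a) e)"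
           "dot (cd_mult a c) e = dot a (cd_mult e (cd_conj c))"
    using IH[of a c e] w by auto
  have h2: "dot (cd_mult (cd_conj d) b) e = dot d (cd_mult b (cd_conj e))"
  proof -
    have "dot (cd_mult (cd_conj d) b) e = dot (cd_conj d) (cd_mult e (cd_conj b))"
      using IH[of "cd_conj d" b e] w by (auto simp: wfs)
    also have "\<dots> = dot d (cd_conj (cd_mult e (cd_conj b)))" by (rule dot_conj2)
    also have "\<dots> = dot d (cd_mult b (cd_conj e))" using w by (simp add: conj_mult[of n] wfs conj_conj)
    finally show ?thesis .
  qed
  have h2': "dot (cd_mult (cd_conj d) b) e = dot b (cd_mult d e)"
    using IH[of "cd_conj d" b e] w by (auto simp: wfs conj_conj)
  have h3: "dot (cd_mult d a) f = dot d (cd_mult f (cd_conj a))"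
           "dot (cd_mult d a) f = dot a (cd_mult (cd_conj d) f)"
    using IH[of d a f] w by auto
  have h4: "dot (cd_mult b (cd_conj c)) f = dot c (cd_mult (cd_conj f) b)"
  proof -
    have "dot (cd_mult b (cd_conj c)) f = dot (cd_conj c) (cd_mult (cd_conj b) f)"
      using IH[of b "cd_conj c" f] w by (auto simp: wfs)
    also have "\<dots> = dot c (cd_conj (cd_mult (cd_conj b) f))" by (rule dot_conj2)
    also have "\<dots> = dot c (cd_mult (cd_conj f) b)" using w by (simp add: conj_mult[of n] wfs conj_conj)
    finally show ?thesis .
  qed
  have h4': "dot (cd_mult b (cd_conj c)) f = dot b (cd_mult f c)"
    using IH[of b "cd_conj c" f] w by (auto simp: wfs conj_conj)
  show ?case using w h1 h2 h2' h3 h4 h4'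
    by (simp add: xyz cd_neg_def wfs dot_add_left[of n] dot_add_right[of n] dot_scale_left dot_scale_right
        mult_scale_left mult_scale_right conj_scale conj_conj)
qed

lemma inner_dot: "cd_wf n x \<Longrightarrow> cd_wf n y \<Longrightarrow> cd_inner x y = dot x y"
  using norm_dot[OF wf_add[of n x y]] norm_dot[of n x] norm_dot[of n y]
  by (simp add: cd_inner_def wfs dot_add_left[of n] dot_add_right[of n] dot_comm[of y x])

lemma dot_one: "cd_wf n x \<Longrightarrow> dot x (cd_one n) = cd_re x"
  by (subst dot_comm) (simp add: dot_of_real)

lemma tr_re: "cd_wf n x \<Longrightarrow> cd_tr x = 2 * cd_re x"
  by (simp add: cd_tr_def add_conj_self re_of_real)

definition ci :: "nat \<Rightarrow> cd \<Rightarrow> real \<Rightarrow> real \<Rightarrow> cd" where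
  "ci n I r s = cd_add (cd_of_real n r) (cd_scale s I)"

lemma CI_ci: "CI n I = {ci n I r s | r s. True}"
  by (simp add: CI_def ci_def)

locale ctx =
  fixes n :: nat and I :: cd
  assumes wI: "cd_wf n I" and reI: "cd_re I = 0" and nI: "dot I I = 1"
begin

lemma wf_ci: "cd_wf n (ci n I r s)"
  by (simp add: ci_def wfs wI)

lemma conj_I: "cd_conj I = cd_scale (-1) I"
proof -
  have s: "cd_add I (cd_conj I) = cd_zero n" using add_conj_self[OF wI] reI by simp
  have "cd_conj I = cd_add (cd_add (cd_scale (-1) I) I) (cd_conj I)"
    using add_neg[OF wI] add_comm[of n I "cd_neg I"] zero_add[of n "cd_conj I"] wI
    by (simp add: wfs cd_neg_def)
  also have "\<dots> = cd_add (cd_scale (-1) I) (cd_zero n)"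
    using add_assoc[of n "cd_scale (-1) I" I "cd_conj I"] wI s by (simp add: wfs)
  also have "\<dots> = cd_scale (-1) I" using add_zero[of n "cd_scale (-1) I"] wI by (simp add: wfs)
  finally show ?thesis .
qed

lemma II: "cd_mult I I = cd_of_real n (-1)"
proof -
  have "cd_mult (cd_conj I) I = cd_of_real n 1" using conj_mult_self[OF wI] nI by simp
  then have "cd_scale (-1) (cd_mult I I) = cd_of_real n 1" by (simp add: conj_I mult_scale_left)
  then have "cd_scale (-1) (cd_scale (-1) (cd_mult I I)) = cd_scale (-1) (cd_of_real n 1)" by simp
  then show ?thesis by (simp add: scale_scale scale_one scale_of_real)
qed

lemma ci_add: "cd_add (ci n I r1 s1) (ci n I r2 s2) = ci n I (r1 + r2) (s1 + s2)"
  unfolding ci_def using wI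
  by (simp add: swap4[of n] wfs add_of_real add_scale[of n])

lemma ci_scale: "cd_scale t (ci n I r s) = ci n I (t*r) (t*s)"
  unfolding ci_def by (simp add: scale_add scale_of_real scale_scale)

lemma ci_mult: "cd_mult (ci n I r1 s1) (ci n I r2 s2) = ci n I (r1*r2 - s1*s2) (r1*s2 + s1*r2)"
proof -
  have XI: "cd_mult (ci n I r1 s1) I = ci n I (-s1) r1"
    unfolding ci_def using wI
    by (simp add: wfs mult_add_left[of n] mult_of_real_left[of n] mult_scale_left II scale_of_real
        add_comm[of n "cd_scale r1 I"])
  have "cd_mult (ci n I r1 s1) (ci n I r2 s2) =
     cd_add (cd_scale r2 (ci n I r1 s1)) (cd_scale s2 (ci n I (-s1) r1))"
    using wI XI unfolding ci_def[of n I r2 s2]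
    by (simp add: wfs wf_ci mult_add_right[of n] mult_of_real_right[of n] mult_scale_right)
  also have "\<dots> = ci n I (r1*r2 - s1*s2) (r1*s2 + s1*r2)"
    by (simp add: ci_scale ci_add algebra_simps)
  finally show ?thesis .
qed

lemma conj_ci: "cd_conj (ci n I r s) = ci n I r (-s)"
  unfolding ci_def using wI by (simp add: conj_add[of n] wfs conj_of_real conj_scale conj_I scale_scale)

lemma dot_ci0: "cd_wf n x \<Longrightarrow> dot (ci n I r s) x = r * cd_re x + s * dot I x"
  unfolding ci_def using wI
  by (simp add: dot_add_left[of n] wfs dot_scale_left dot_of_real)
lemma dot_ci: "cd_wf n x \<Longrightarrow> dot x (ci n I r s) = r * dot x (cd_one n) + s * dot x I"
  using dot_ci0[of x r s] dot_comm[of x "ci n I r s"] dot_comm[of x I] dot_one[of n x] by simp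

lemma dotI1: "dot I (cd_one n) = 0" using dot_one[OF wI] reI by simp
lemma dot11: "dot (cd_one n) (cd_one n) = 1" by (simp add: dot_one wfs re_of_real)

lemma perp_iff: "a \<in> CI_perp n I \<longleftrightarrow> cd_wf n a \<and> dot a (cd_one n) = 0 \<and> dot a I = 0"
proof
  assume a: "a \<in> CI_perp n I"
  then have w: "cd_wf n a" by (simp add: CI_perp_def CD_def)
  have "cd_inner a (ci n I 1 0) = 0" "cd_inner a (ci n I 0 1) = 0"
    using a by (auto simp: CI_perp_def CI_ci)
  then show "cd_wf n a \<and> dot a (cd_one n) = 0 \<and> dot a I = 0"
    using w by (simp add: inner_dot wf_ci dot_ci)
next
  assume "cd_wf n a \<and> dot a (cd_one n) = 0 \<and> dot a I = 0"
  then show "a \<in> CI_perp n I"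
    by (auto simp: CI_perp_def CI_ci CD_def inner_dot wf_ci dot_ci)
qed

lemma CI_wf: "p \<in> CI n I \<Longrightarrow> cd_wf n p"
  by (auto simp: CI_ci wf_ci)

lemma zero_ci: "cd_zero n = ci n I 0 0"
  unfolding ci_def using wI by (simp add: scale_zero[of n] add_zero wfs)

lemma one_ci: "cd_one n = ci n I 1 0"
  unfolding ci_def using wI by (simp add: scale_zero[of n] add_zero wfs)

lemma dot_diff: "cd_wf n a \<Longrightarrow> cd_wf n p \<Longrightarrow> cd_wf n w \<Longrightarrow> dot (cd_diff a p) w = dot a w - dot p w"
  by (simp add: cd_diff_def cd_neg_def dot_add_left[of n] wfs dot_scale_left)

lemma diff_perp: "cd_wf n a \<Longrightarrow> cd_diff a (ci n I r s) \<in> CI_perp n I \<longleftrightarrow>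
    r = dot a (cd_one n) \<and> s = dot a I"
  unfolding perp_iff using wI
  by (auto simp: wfs wf_ci dot_diff dot_comm[of "ci n I r s"] dot_ci dot11 dotI1 nI dot_comm[of "cd_one n" I])

lemma proj_ex1: "cd_wf n a \<Longrightarrow> \<exists>!p. p \<in> CI n I \<and> cd_diff a p \<in> CI_perp n I"
  by (rule ex1I[of _ "ci n I (dot a (cd_one n)) (dot a I)"]) (auto simp: CI_ci diff_perp)

lemma proj_props: "cd_wf n a \<Longrightarrow> proj_I n I a \<in> CI n I \<and> cd_diff a (proj_I n I a) \<in> CI_perp n I"
  unfolding proj_I_def by (rule theI'[OF proj_ex1])


lemma CI_add: "p \<in> CI n I \<Longrightarrow> q \<in> CI n I \<Longrightarrow> cd_add p q \<in> CI n I"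
  by (clarsimp simp: CI_ci ci_add) blast
lemma CI_mult: "p \<in> CI n I \<Longrightarrow> q \<in> CI n I \<Longrightarrow> cd_mult p q \<in> CI n I"
  by (clarsimp simp: CI_ci ci_mult) blast
lemma CI_conj: "p \<in> CI n I \<Longrightarrow> cd_conj p \<in> CI n I"
  by (clarsimp simp: CI_ci conj_ci) blast
lemma CI_zero: "cd_zero n \<in> CI n I"
  by (auto simp: CI_ci zero_ci)
lemma CI_one: "cd_one n \<in> CI n I"
  by (auto simp: CI_ci one_ci)
lemma CI_pow: "lam \<in> CI n I \<Longrightarrow> cd_pow n lam k \<in> CI n I"
  by (induction k) (auto simp: CI_one CI_mult)

lemma perp_wf: "a \<in> CI_perp n I \<Longrightarrow> cd_wf n a"
  by (simp add: CI_perp_def CD_def)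

lemma perp_mult: "a \<in> CI_perp n I \<Longrightarrow> c \<in> CI n I \<Longrightarrow> cd_mult a c \<in> CI_perp n I"
proof -
  assume a: "a \<in> CI_perp n I" and c: "c \<in> CI n I"
  have wa: "cd_wf n a" and wc: "cd_wf n c" using a c perp_wf CI_wf by auto
  { fix b assume b: "b \<in> CI n I"
    have wb: "cd_wf n b" using b CI_wf by auto
    have "cd_inner (cd_mult a c) b = dot (cd_mult a c) b" using wa wb wc by (simp add: inner_dot[of n] wfs)
    also have "\<dots> = dot a (cd_mult b (cd_conj c))" using adjoint[of n a c b] wa wb wc by simp
    also have "\<dots> = cd_inner a (cd_mult b (cd_conj c))" using wa wb wc by (simp add: inner_dot[of n] wfs)
    also have "\<dots> = 0" using a b c by (simp add: CI_perp_def CI_mult CI_conj)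
    finally have "cd_inner (cd_mult a c) b = 0" . }
  then show ?thesis using wa wc by (simp add: CI_perp_def CD_def wfs)
qed

lemma perp_add: "a \<in> CI_perp n I \<Longrightarrow> b \<in> CI_perp n I \<Longrightarrow> cd_add a b \<in> CI_perp n I"
  by (simp add: perp_iff wfs dot_add_left[of n] wI)

lemma perp_zero: "cd_zero n \<in> CI_perp n I"
  by (simp add: perp_iff wfs dot_of_real wI)

lemma decomp_zero: "Y \<in> CI n I \<Longrightarrow> Z \<in> CI_perp n I \<Longrightarrow>
   cd_add Y Z = cd_zero n \<longleftrightarrow> Y = cd_zero n \<and> Z = cd_zero n"
proof -
  assume Y: "Y \<in> CI n I" and Z: "Z \<in> CI_perp n I"
  have wY: "cd_wf n Y" and wZ: "cd_wf n Z" using Y Z CI_wf perp_wf by auto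
  show ?thesis
  proof
    assume s: "cd_add Y Z = cd_zero n"
    have "dot Z Y = 0" using Z Y wY wZ inner_dot[of n Z Y] by (simp add: CI_perp_def)
    moreover have "dot (cd_add Y Z) Y = dot Y Y + dot Z Y" using wY wZ by (simp add: dot_add_left[of n])
    moreover have "dot (cd_zero n) Y = 0" using wY by (simp add: dot_of_real)
    ultimately have "dot Y Y = 0" using s by simp
    then have Y0: "Y = cd_zero n" using dot_self_zero wY by blast
    then have "Z = cd_zero n" using s zero_add[OF wZ] by simp
    then show "Y = cd_zero n \<and> Z = cd_zero n" using Y0 by simp
  next
    assume "Y = cd_zero n \<and> Z = cd_zero n"
    then show "cd_add Y Z = cd_zero n" by (simp add: add_of_real)
  qed
qed

end

lemma sum_closed: "cd_zero n \<in> S \<Longrightarrow> (\<And>a b. a \<in> S \<Longrightarrow> b \<in> S \<Longrightarrow> cd_add a b \<in> S) \<Longrightarrow>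
   set xs \<subseteq> S \<Longrightarrow> cd_sum n xs \<in> S"
  by (induction xs) auto

lemma wf_sum: "(\<And>x. x \<in> set xs \<Longrightarrow> cd_wf n x) \<Longrightarrow> cd_wf n (cd_sum n xs)"
  by (induction xs) (auto simp: wfs)

lemma sum_split: "(\<And>k. k \<in> set ks \<Longrightarrow> cd_wf n (u k) \<and> cd_wf n (v k)) \<Longrightarrow>
  cd_sum n (map (\<lambda>k. cd_add (u k) (v k)) ks) = cd_add (cd_sum n (map u ks)) (cd_sum n (map v ks))"
proof (induction ks)
  case Nil then show ?case by (simp add: add_of_real)
next
  case (Cons k ks)
  have w: "cd_wf n (cd_sum n (map u ks))" "cd_wf n (cd_sum n (map v ks))"
    using Cons.prems by (auto intro!: wf_sum)
  then show ?case using Cons by (simp add: swap4[of n])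
qed

lemma add_diff_cancel: "cd_wf n a \<Longrightarrow> cd_wf n p \<Longrightarrow> cd_add p (cd_diff a p) = a"
proof -
  assume a: "cd_wf n a" and p: "cd_wf n p"
  have "cd_add p (cd_diff a p) = cd_add p (cd_add (cd_neg p) a)"
    using a p by (simp add: cd_diff_def add_comm[of n a] wfs)
  also have "\<dots> = cd_add (cd_add p (cd_neg p)) a" using a p by (simp add: add_assoc[of n] wfs)
  also have "\<dots> = a" using a p by (simp add: add_neg zero_add)
  finally show ?thesis .
qed

theorem proposition4p6:
  fixes n :: nat and I :: cd and f :: "cd list" and lam :: cd
  assumes "I \<in> CD n" and "cd_tr I = 0" and "cd_norm I = 1"
    and "set f \<subseteq> CD n"
    and "lam \<in> CI n I"
  shows "poly_eval n (poly_I n I f) lam \<in> CI n I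
     \<and> poly_eval n (poly_I_perp n I f) lam \<in> CI_perp n I
     \<and> (poly_eval n f lam = cd_zero n \<longleftrightarrow>
          poly_eval n (poly_I n I f) lam = cd_zero n \<and> poly_eval n (poly_I_perp n I f) lam = cd_zero n)"
proof -
  have wI: "cd_wf n I" using assms(1) by (simp add: CD_def)
  interpret ctx n I
    using wI assms(2,3) by unfold_locales (auto simp: tr_re norm_dot)
  have wf_f: "\<And>k. k < length f \<Longrightarrow> cd_wf n (f ! k)"
    using assms(4) nth_mem by (fastforce simp: CD_def)
  define P where "P k = cd_mult (proj_I n I (f ! k)) (cd_pow n lam k)" for k
  define Q where "Q k = cd_mult (cd_diff (f ! k) (proj_I n I (f ! k))) (cd_pow n lam k)" for k
  have eI: "poly_eval n (poly_I n I f) lam = cd_sum n (map P [0..<length f])"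
    unfolding poly_eval_def poly_I_def P_def by (intro arg_cong[of _ _ "cd_sum n"] map_cong) auto
  have eP: "poly_eval n (poly_I_perp n I f) lam = cd_sum n (map Q [0..<length f])"
    unfolding poly_eval_def poly_I_perp_def Q_def by (intro arg_cong[of _ _ "cd_sum n"] map_cong) auto
  have powCI: "cd_pow n lam k \<in> CI n I" for k using CI_pow assms(5) by blast
  have PCI: "P k \<in> CI n I" if "k < length f" for k
    using proj_props[OF wf_f[OF that]] powCI by (simp add: P_def CI_mult)
  have QP: "Q k \<in> CI_perp n I" if "k < length f" for k
    using proj_props[OF wf_f[OF that]] powCI by (simp add: Q_def perp_mult)
  have Y: "poly_eval n (poly_I n I f) lam \<in> CI n I"
    unfolding eI by (rule sum_closed[OF CI_zero CI_add]) (auto intro: PCI)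
  have Z: "poly_eval n (poly_I_perp n I f) lam \<in> CI_perp n I"
    unfolding eP by (rule sum_closed[OF perp_zero perp_add]) (auto intro: QP)
  have e: "poly_eval n f lam = cd_sum n (map (\<lambda>k. cd_add (P k) (Q k)) [0..<length f])"
    unfolding poly_eval_def
  proof (intro arg_cong[of _ _ "cd_sum n"] map_cong refl)
    fix k assume "k \<in> set [0..<length f]"
    then have k: "k < length f" by simp
    have wp: "cd_wf n (proj_I n I (f ! k))" using proj_props[OF wf_f[OF k]] CI_wf by blast
    have wl: "cd_wf n (cd_pow n lam k)" using powCI CI_wf by blast
    have "f ! k = cd_add (proj_I n I (f ! k)) (cd_diff (f ! k) (proj_I n I (f ! k)))"
      using add_diff_cancel[OF wf_f[OF k] wp] by simp
    then show "cd_mult (f ! k) (cd_pow n lam k) = cd_add (P k) (Q k)"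
      unfolding P_def Q_def using mult_add_left[OF wp wf_diff[OF wf_f[OF k] wp] wl] by simp
  qed
  have "poly_eval n f lam = cd_add (poly_eval n (poly_I n I f) lam) (poly_eval n (poly_I_perp n I f) lam)"
    unfolding e eI eP
    by (rule sum_split) (auto intro: CI_wf[OF PCI] perp_wf[OF QP])
  then show ?thesis using Y Z decomp_zero[OF Y Z] by simp
qed
end
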